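(* Let $X$ be a discrete random variable with exactly $K\ge1$ mass points in $[0,1]$ and let $L>K$ be an integer. Then \[ \sum_{k=1}^{2L-2}\bigl(\mathbb E[\tilde T_k(X)]\bigr)^2\ \ge\ \frac{L-K}{4L}. \]
   Context: $\tilde T_k(x)=\cos(k\arccos(2x-1))$, $x\in[0,1]$, is the shifted Chebyshev polynomial of the first kind of degree $k$. *)

theory Defs
  imports "HOL-Probability.Probability"
begin

definition shifted_cheb :: "nat \<Rightarrow> real \<Rightarrow> real" where
  "shifted_cheb k x = cos (real k * arccos (2 * x - 1))"

end

theory Submission
  imports Defs
begin

definition PP :: "nat \<Rightarrow> real \<Rightarrow> real" where
  "PP N phi = (\<Sum>a\<le>N. cos (real a * phi))\<^sup>2 + (\<Sum>a\<le>N. sin (real a * phi))\<^sup>2"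

lemma PP_nonneg: "PP N phi \<ge> 0" unfolding PP_def by simp

lemma PP_0: "PP N 0 = (real N + 1)\<^sup>2" unfolding PP_def by simp

lemma dsum_cos: "(\<Sum>a\<le>N. \<Sum>b\<le>N. cos ((real a - real b) * phi)) = PP N phi"
proof -
  have "(\<Sum>a\<le>N. \<Sum>b\<le>N. cos ((real a - real b) * phi))
      = (\<Sum>a\<le>N. \<Sum>b\<le>N. cos (real a * phi) * cos (real b * phi) + sin (real a * phi) * sin (real b * phi))"
    by (intro sum.cong refl) (simp add: left_diff_distrib cos_diff del: of_nat_diff)
  also have "\<dots> = PP N phi"
    unfolding PP_def power2_eq_square sum_product sum.distrib by simp
  finally show ?thesis .
qed

lemma Q_id: "(\<Sum>a\<le>N. \<Sum>b\<le>N. cos ((real a - real b) * x) * cos ((real a - real b) * y))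
   = (PP N (x + y) + PP N (x - y)) / 2"
proof -
  have "(\<Sum>a\<le>N. \<Sum>b\<le>N. cos ((real a - real b) * x) * cos ((real a - real b) * y))
     = (\<Sum>a\<le>N. \<Sum>b\<le>N. (cos ((real a - real b) * (x+y)) + cos ((real a - real b) * (x-y)))/2)"
    by (intro sum.cong refl) (simp add: distrib_left right_diff_distrib cos_add cos_diff)
  also have "\<dots> = (PP N (x + y) + PP N (x - y)) / 2"
    by (simp add: sum_divide_distrib[symmetric] sum.distrib dsum_cos)
  finally show ?thesis .
qed

lemma sumsq_lower:
  fixes S :: "'a set" and w :: "'a \<Rightarrow> real"
  assumes "finite S" "S \<noteq> {}" "sum w S = 1"
  shows "(\<Sum>x\<in>S. (w x)\<^sup>2) \<ge> 1 / real (card S)"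
proof -
  define c where "c = 1 / real (card S)"
  have n: "real (card S) > 0" using assms(1,2) by (simp add: card_gt_0_iff)
  have "(\<Sum>x\<in>S. (w x - c)\<^sup>2) = (\<Sum>x\<in>S. (w x)\<^sup>2 - 2 * c * w x + c\<^sup>2)"
      by (intro sum.cong refl) (simp add: power2_diff)
  also have "\<dots> = (\<Sum>x\<in>S. (w x)\<^sup>2) - (\<Sum>x\<in>S. 2 * c * w x) + (\<Sum>x\<in>S. c\<^sup>2)"
      by (simp only: sum.distrib sum_subtractf)
  also have "\<dots> = (\<Sum>x\<in>S. (w x)\<^sup>2) - 2 * c * sum w S + real (card S) * c\<^sup>2"
      by (simp only: sum_distrib_left[symmetric] sum_constant)
  also have "\<dots> = (\<Sum>x\<in>S. (w x)\<^sup>2) - c"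
    using n assms(3) unfolding c_def power2_eq_square by simp
  finally have "0 \<le> (\<Sum>x\<in>S. (w x)\<^sup>2) - c" by (metis sum_nonneg zero_le_power2)
  then show ?thesis unfolding c_def by simp
qed
lemma swap4: "(\<Sum>a\<in>A. \<Sum>b\<in>B. \<Sum>x\<in>C. \<Sum>y\<in>D. f a b x y) = (\<Sum>x\<in>C. \<Sum>y\<in>D. \<Sum>a\<in>A. \<Sum>b\<in>B. f a b x y)"
proof -
  have "(\<Sum>a\<in>A. \<Sum>b\<in>B. \<Sum>x\<in>C. \<Sum>y\<in>D. f a b x y) = (\<Sum>a\<in>A. \<Sum>x\<in>C. \<Sum>b\<in>B. \<Sum>y\<in>D. f a b x y)"
    by (rule sum.cong[OF refl], rule sum.swap)
  also have "\<dots> = (\<Sum>a\<in>A. \<Sum>x\<in>C. \<Sum>y\<in>D. \<Sum>b\<in>B. f a b x y)"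
    by (rule sum.cong[OF refl], rule sum.cong[OF refl], rule sum.swap)
  also have "\<dots> = (\<Sum>x\<in>C. \<Sum>a\<in>A. \<Sum>y\<in>D. \<Sum>b\<in>B. f a b x y)"
    by (rule sum.swap)
  also have "\<dots> = (\<Sum>x\<in>C. \<Sum>y\<in>D. \<Sum>a\<in>A. \<Sum>b\<in>B. f a b x y)"
    by (rule sum.cong[OF refl], rule sum.swap)
  finally show ?thesis .
qed

lemma key:
  fixes S :: "'a set" and w t :: "'a \<Rightarrow> real" and N :: nat
  assumes "finite S" "S \<noteq> {}" "\<And>x. x \<in> S \<Longrightarrow> w x \<ge> 0" "sum w S = 1"
  shows "(real N + 1)\<^sup>2 / (2 * real (card S)) \<le>
     (\<Sum>a\<le>N. \<Sum>b\<le>N. (\<Sum>x\<in>S. w x * cos ((real a - real b) * t x))\<^sup>2)"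
proof -
  let ?c = "\<lambda>a b x. cos ((real a - real b) * t x)"
  let ?Q = "\<lambda>x y. (PP N (t x + t y) + PP N (t x - t y)) / 2"
  have sq: "(\<Sum>x\<in>S. w x * ?c a b x)\<^sup>2 = (\<Sum>x\<in>S. \<Sum>y\<in>S. w x * w y * (?c a b x * ?c a b y))" for a b
  proof -
    have "(\<Sum>x\<in>S. w x * ?c a b x)\<^sup>2 = (\<Sum>x\<in>S. \<Sum>y\<in>S. (w x * ?c a b x) * (w y * ?c a b y))"
      by (simp only: power2_eq_square sum_product)
    also have "\<dots> = (\<Sum>x\<in>S. \<Sum>y\<in>S. w x * w y * (?c a b x * ?c a b y))"
      by (intro sum.cong refl) (simp only: mult_ac)
    finally show ?thesis .
  qed
  have "(\<Sum>a\<le>N. \<Sum>b\<le>N. (\<Sum>x\<in>S. w x * ?c a b x)\<^sup>2)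
     = (\<Sum>a\<le>N. \<Sum>b\<le>N. \<Sum>x\<in>S. \<Sum>y\<in>S. w x * w y * (?c a b x * ?c a b y))"
    by (simp only: sq)
  also have "\<dots> = (\<Sum>x\<in>S. \<Sum>y\<in>S. \<Sum>a\<le>N. \<Sum>b\<le>N. w x * w y * (?c a b x * ?c a b y))"
    by (rule swap4)
  also have "\<dots> = (\<Sum>x\<in>S. \<Sum>y\<in>S. w x * w y * (\<Sum>a\<le>N. \<Sum>b\<le>N. ?c a b x * ?c a b y))"
    by (simp only: sum_distrib_left)
  also have "\<dots> = (\<Sum>x\<in>S. \<Sum>y\<in>S. w x * w y * ?Q x y)"
    by (simp only: Q_id)
  finally have E: "(\<Sum>a\<le>N. \<Sum>b\<le>N. (\<Sum>x\<in>S. w x * ?c a b x)\<^sup>2) = (\<Sum>x\<in>S. \<Sum>y\<in>S. w x * w y * ?Q x y)" .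
  have Qn: "?Q x y \<ge> 0" for x y using PP_nonneg[of N "t x + t y"] PP_nonneg[of N "t x - t y"] by simp
  have Q0: "(real N + 1)\<^sup>2 / 2 \<le> ?Q x x" for x
  proof -
    have "PP N (t x - t x) = (real N + 1)\<^sup>2" using PP_0[of N] by simp
    then have "?Q x x = (PP N (t x + t x) + (real N + 1)\<^sup>2) / 2" by simp
    moreover have "(real N + 1)\<^sup>2 / 2 \<le> (PP N (t x + t x) + (real N + 1)\<^sup>2) / 2"
      by (rule divide_right_mono) (use PP_nonneg[of N "t x + t x"] in auto)
    ultimately show ?thesis by simp
  qed
  have A: "(\<Sum>x\<in>S. (w x)\<^sup>2 * ((real N + 1)\<^sup>2 / 2)) \<le> (\<Sum>x\<in>S. \<Sum>y\<in>S. w x * w y * ?Q x y)"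
  proof (rule sum_mono)
    fix x assume x: "x \<in> S"
    have "(w x)\<^sup>2 * ((real N + 1)\<^sup>2 / 2) \<le> w x * w x * ?Q x x"
    proof -
      from Q0[of x] show ?thesis unfolding power2_eq_square[of "w x"] by (rule mult_left_mono) simp
    qed
    also have "\<dots> \<le> (\<Sum>y\<in>S. w x * w y * ?Q x y)"
    proof (rule member_le_sum[OF x, of "\<lambda>y. w x * w y * ?Q x y"])
      fix y assume "y \<in> S - {x}"
      then show "0 \<le> w x * w y * ?Q x y"
        using assms(3) x Qn[of x y] by (simp add: mult_nonneg_nonneg)
    qed (simp add: assms(1))
    finally show "(w x)\<^sup>2 * ((real N + 1)\<^sup>2 / 2) \<le> (\<Sum>y\<in>S. w x * w y * ?Q x y)" .
  qed
  have "(\<Sum>x\<in>S. (w x)\<^sup>2 * ((real N + 1)\<^sup>2 / 2)) = (\<Sum>x\<in>S. (w x)\<^sup>2) * ((real N + 1)\<^sup>2 / 2)"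
    by (simp only: sum_distrib_right)
  also have "\<dots> \<ge> (1 / real (card S)) * ((real N + 1)\<^sup>2 / 2)"
    by (intro mult_right_mono sumsq_lower assms) simp
  finally have B: "(real N + 1)\<^sup>2 / (2 * real (card S)) \<le> (\<Sum>x\<in>S. (w x)\<^sup>2 * ((real N + 1)\<^sup>2 / 2))"
    by simp
  show ?thesis using A B E by linarith
qed

lemma per_a:
  fixes h H :: "nat \<Rightarrow> real"
  assumes h: "\<And>k. h k \<ge> 0" and aN: "a \<le> N"
    and H1: "\<And>b. b \<le> a \<Longrightarrow> H b = h (a - b)"
    and H2: "\<And>b. a < b \<Longrightarrow> H b = h (b - a)"
  shows "(\<Sum>b\<le>N. H b) \<le> h 0 + 2 * (\<Sum>k=1..N. h k)"
proof -
  have U: "{..N} = {0..a} \<union> {Suc a..N}" using aN by auto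
  have "(\<Sum>b\<le>N. H b) = (\<Sum>b\<in>{0..a}. H b) + (\<Sum>b\<in>{Suc a..N}. H b)"
    unfolding U by (rule sum.union_disjoint) auto
  moreover have "(\<Sum>b\<in>{0..a}. H b) \<le> h 0 + (\<Sum>k=1..N. h k)"
  proof -
    have "(\<Sum>b\<in>{0..a}. H b) = (\<Sum>b\<in>{0..a}. h (a - b))" by (intro sum.cong refl) (simp add: H1)
    also have "\<dots> = (\<Sum>k\<in>{0..a}. h k)"
      using sum.atLeastAtMost_rev[of h 0 a] by simp
    also have "\<dots> = h 0 + (\<Sum>k\<in>{1..a}. h k)" by (simp add: sum.atLeast_Suc_atMost)
    also have "(\<Sum>k\<in>{1..a}. h k) \<le> (\<Sum>k=1..N. h k)"
      by (rule sum_mono2) (use aN h in auto)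
    finally show ?thesis by simp
  qed
  moreover have "(\<Sum>b\<in>{Suc a..N}. H b) \<le> (\<Sum>k=1..N. h k)"
  proof -
    have "(\<Sum>b\<in>{Suc a..N}. H b) = (\<Sum>b\<in>{1+a..(N-a)+a}. h (b - a))"
      using aN by (intro sum.cong) (auto simp: H2)
    also have "\<dots> = (\<Sum>i\<in>{1..N-a}. h i)"
      by (subst sum.shift_bounds_cl_nat_ivl) simp
    also have "\<dots> \<le> (\<Sum>k=1..N. h k)"
      by (rule sum_mono2) (use h in auto)
    finally show ?thesis .
  qed
  ultimately show ?thesis by linarith
qed

lemma final_arith:
  fixes K L T :: real
  assumes "K \<ge> 1" "L \<ge> K + 1" "(2 * L - 1) / (2 * K) \<le> 1 + 2 * T"
  shows "(L - K) / (4 * L) \<le> T"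
proof -
  have "2 * L - 1 \<le> 2 * K * (1 + 2 * T)" using assms(1,3) by (simp add: field_simps)
  hence T: "(2 * L - 1 - 2 * K) \<le> 4 * K * T" by (simp add: algebra_simps)
  have "(L - K) * K \<le> L * (2 * L - 1 - 2 * K)"
  proof -
    have "0 \<le> (2 * L - K) * (L - K) - L"
    proof -
      have "(2 * L - K) * (L - K) \<ge> (L + 1) * 1"
        by (rule mult_mono) (use assms in auto)
      thus ?thesis by simp
    qed
    thus ?thesis by (simp add: algebra_simps)
  qed
  also have "\<dots> \<le> L * (4 * K * T)" using T assms by (intro mult_left_mono) auto
  finally have "(L - K) * K \<le> (4 * L * T) * K" by (simp add: algebra_simps)
  hence "L - K \<le> 4 * L * T" using assms(1) by simp
  thus ?thesis using assms by (simp add: field_simps)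
qed

theorem mainTheorem12:
  fixes p :: "real pmf" and K L :: nat
  assumes "finite (set_pmf p)"
    and "card (set_pmf p) = K"
    and "K \<ge> 1"
    and "set_pmf p \<subseteq> {0..1}"
    and "L > K"
  shows "(\<Sum>k = 1..2 * L - 2. (measure_pmf.expectation p (shifted_cheb k))\<^sup>2)
           \<ge> (real L - real K) / (4 * real L)"
proof -
  define S where "S = set_pmf p"
  define w where "w = pmf p"
  define t where "t x = arccos (2 * x - 1)" for x :: real
  define m where "m k = (\<Sum>x\<in>S. w x * cos (real k * t x))" for k :: nat
  define N where "N = 2 * L - 2"
  have fin: "finite S" using assms(1) S_def by simp
  have cardS: "card S = K" using assms(2) S_def by simp
  have ne: "S \<noteq> {}" using cardS assms(3) by auto
  have wn: "\<And>x. x \<in> S \<Longrightarrow> w x \<ge> 0" unfolding w_def by simp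
  have sw: "sum w S = 1" unfolding w_def S_def by (rule sum_pmf_eq_1) (use fin S_def in auto)
  have Em: "measure_pmf.expectation p (shifted_cheb k) = m k" for k
  proof -
    have "measure_pmf.expectation p (shifted_cheb k) = (\<Sum>a\<in>S. shifted_cheb k a * pmf p a)"
      by (rule integral_measure_pmf_real) (use fin S_def in auto)
    also have "\<dots> = m k" unfolding m_def w_def t_def shifted_cheb_def
      by (intro sum.cong refl) (simp add: mult.commute)
    finally show ?thesis .
  qed
  define T where "T = (\<Sum>k=1..N. (m k)\<^sup>2)"
  have m0: "m 0 = 1" unfolding m_def using sw by simp
  have per: "(\<Sum>b\<le>N. (\<Sum>x\<in>S. w x * cos ((real a - real b) * t x))\<^sup>2) \<le> 1 + 2 * T"
    if aN: "a \<le> N" for a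
  proof -
    have "(\<Sum>b\<le>N. (\<Sum>x\<in>S. w x * cos ((real a - real b) * t x))\<^sup>2) \<le> (m 0)\<^sup>2 + 2 * (\<Sum>k=1..N. (m k)\<^sup>2)"
    proof (rule per_a[OF _ aN])
      fix b assume "b \<le> a"
      then show "(\<Sum>x\<in>S. w x * cos ((real a - real b) * t x))\<^sup>2 = (m (a - b))\<^sup>2"
        unfolding m_def by (simp add: of_nat_diff)
    next
      fix b assume ab: "a < b"
      have "cos ((real a - real b) * y) = cos (real (b - a) * y)" for y
      proof -
        have "(real a - real b) * y = - (real (b - a) * y)" using ab by (simp add: of_nat_diff algebra_simps)
        then show ?thesis by (simp only: cos_minus)
      qed
      then show "(\<Sum>x\<in>S. w x * cos ((real a - real b) * t x))\<^sup>2 = (m (b - a))\<^sup>2"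
        unfolding m_def by simp
    qed simp
    then show ?thesis unfolding T_def m0 by simp
  qed
  have "(real N + 1)\<^sup>2 / (2 * real (card S)) \<le>
     (\<Sum>a\<le>N. \<Sum>b\<le>N. (\<Sum>x\<in>S. w x * cos ((real a - real b) * t x))\<^sup>2)"
    by (rule key[OF fin ne wn sw])
  also have "\<dots> \<le> (\<Sum>a\<le>N. 1 + 2 * T)" by (rule sum_mono) (use per in auto)
  also have "\<dots> = (real N + 1) * (1 + 2 * T)" by simp
  finally have "(real N + 1) * ((real N + 1) / (2 * real K)) \<le> (real N + 1) * (1 + 2 * T)"
    unfolding cardS by (simp add: power2_eq_square)
  then have "(real N + 1) / (2 * real K) \<le> 1 + 2 * T"
    by (rule mult_left_le_imp_le) simp
  moreover have "real N + 1 = 2 * real L - 1" unfolding N_def using assms(3,5) by (simp add: of_nat_diff)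
  ultimately have "(2 * real L - 1) / (2 * real K) \<le> 1 + 2 * T" by simp
  then have "(real L - real K) / (4 * real L) \<le> T"
    by (rule final_arith[rotated 2]) (use assms(3,5) in auto)
  moreover have "T = (\<Sum>k = 1..2 * L - 2. (measure_pmf.expectation p (shifted_cheb k))\<^sup>2)"
    unfolding T_def N_def Em ..
  ultimately show ?thesis by simp
qed

end
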